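(* For every integer $k\ge1$, the sequence $\big(P_n^{(\alpha,\beta,v,k)}\big)_{n\ge k}$ is orthogonal with respect to the weight matrix $W^{(k)}$, i.e. $\int_0^1P_n^{(\alpha,\beta,v,k)}(t)W^{(k)}(t)\big(P_m^{(\alpha,\beta,v,k)}(t)\big)^*dt=0$ for $n\neq m$, $n,m\ge k$.
   Context: Fix real $\alpha,\beta,v$ with $\alpha>-1$, $\beta>-1$, $|\alpha-\beta|<|v|<\alpha+\beta+2$. For real parameters $a,b,v$ write $\kappa'_{\pm v,\pm b}=a\pm v\pm b$ and define $$W^{(a,b,v)}(t)=t^a(1-t)^b\begin{pmatrix}\frac{v(\kappa'_{v,b}+2)}{\kappa'_{v,-b}}t^2-(\kappa'_{v,b}+2)t+(a+1) & (a+b+2)t-(a+1)\\ (a+b+2)t-(a+1) & -\frac{v(\kappa'_{-v,b}+2)}{\kappa'_{-v,-b}}t^2-(\kappa'_{-v,b}+2)t+(a+1)\end{pmatrix},\quad t\in(0,1),$$ and $W^{(k)}=W^{(\alpha+k,\beta+k,v)}$. Let $(P_n^{(\alpha,\beta,v)})_{n\ge0}$ be the monic $2\times2$ matrix polynomials orthogonal w.r.t. $W^{(0)}$ (inner product $\int_0^1PW^{(0)}Q^*dt$), and for $n\ge k$ set $P_n^{(\alpha,\beta,v,k)}=\frac{(n-k)!}{n!}\frac{d^k}{dt^k}P_n^{(\alpha,\beta,v)}$. *)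

theory Defs
  imports "HOL-Analysis.Analysis"
begin

text \<open>2x2 real matrices are rendered as real^2^2; matrix products via **, transpose via transpose
  (for real matrices the adjoint is the transpose).\<close>

definition mat2 :: "real \<Rightarrow> real \<Rightarrow> real \<Rightarrow> real \<Rightarrow> real^2^2" where
  "mat2 x11 x12 x21 x22 =
     (\<chi> i j. if i = 1 then (if j = 1 then x11 else x12) else (if j = 1 then x21 else x22))"

text \<open>The weight matrix W^(a,b,v)(t), with kappa'_{+-v,+-b} = a +- v +- b.\<close>
definition Wmat :: "real \<Rightarrow> real \<Rightarrow> real \<Rightarrow> real \<Rightarrow> real^2^2" where
  "Wmat a b v t = (t powr a * (1 - t) powr b) *\<^sub>R
     mat2 (v * (a + v + b + 2) / (a + v - b) * t^2 - (a + v + b + 2) * t + (a + 1))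
          ((a + b + 2) * t - (a + 1))
          ((a + b + 2) * t - (a + 1))
          (- v * (a - v + b + 2) / (a - v - b) * t^2 - (a - v + b + 2) * t + (a + 1))"

definition mpoly_eval :: "(nat \<Rightarrow> real^2^2) \<Rightarrow> nat \<Rightarrow> real \<Rightarrow> real^2^2" where
  "mpoly_eval C n t = (\<Sum>i\<le>n. (t ^ i) *\<^sub>R C i)"

definition monic_deg :: "(nat \<Rightarrow> real^2^2) \<Rightarrow> nat \<Rightarrow> bool" where
  "monic_deg C n \<longleftrightarrow> C n = mat 1"

definition orth_wrt :: "(real \<Rightarrow> real^2^2) \<Rightarrow> (real \<Rightarrow> real^2^2) \<Rightarrow> (real \<Rightarrow> real^2^2) \<Rightarrow> bool" where
  "orth_wrt W P Q \<longleftrightarrow> ((\<lambda>t. P t ** W t ** transpose (Q t)) has_integral 0) {0..1}"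

definition kth_deriv :: "nat \<Rightarrow> (real \<Rightarrow> real^2^2) \<Rightarrow> real \<Rightarrow> real^2^2" where
  "kth_deriv k f = ((\<lambda>g t. vector_derivative g (at t)) ^^ k) f"

end

theory Submission
  imports Defs
begin

lemma mm_add_r: "((A::real^2^2) + B) ** C = A ** C + B ** C"
  by (vector matrix_matrix_mult_def sum.distrib[symmetric] field_simps)
lemma mm_diff_r: "((A::real^2^2) - B) ** C = A ** C - B ** C"
  by (vector matrix_matrix_mult_def sum_subtractf[symmetric] field_simps)
lemma mm_diff_l: "(A::real^2^2) ** (B - C) = A ** B - A ** C"
  by (vector matrix_matrix_mult_def sum_subtractf[symmetric] field_simps)
lemma tr_add: "transpose ((A::real^2^2) + B) = transpose A + transpose B"
  by (vector transpose_def)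
lemma tr_diff: "transpose ((A::real^2^2) - B) = transpose A - transpose B"
  by (vector transpose_def)
lemma tr_zero: "transpose (0::real^2^2) = 0"
  by (vector transpose_def)

lemma mm_sum_l: "finite S \<Longrightarrow> (A::real^2^2) ** sum f S = (\<Sum>i\<in>S. A ** f i)"
  by (induct S rule: finite_induct) (auto simp: matrix_add_ldistrib)
lemma mm_sum_r: "finite S \<Longrightarrow> sum (f::_\<Rightarrow>real^2^2) S ** (A::real^2^2) = (\<Sum>i\<in>S. f i ** A)"
  by (induct S rule: finite_induct) (auto simp: mm_add_r)
lemma tr_sum: "finite S \<Longrightarrow> transpose (sum f S :: real^2^2) = (\<Sum>i\<in>S. transpose (f i))"
  by (induct S rule: finite_induct) (auto simp: tr_add tr_zero)

lemma bilin_mm: "bounded_bilinear ((**) :: real^2^2 \<Rightarrow> real^2^2 \<Rightarrow> real^2^2)"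
proof -
  have "bilinear ((**) :: real^2^2 \<Rightarrow> real^2^2 \<Rightarrow> real^2^2)"
    unfolding bilinear_def
    by (auto intro!: linearI simp: matrix_add_ldistrib mm_add_r matrix_scalar_ac scalar_matrix_assoc)
  then show ?thesis using bilinear_conv_bounded_bilinear by blast
qed

lemma bl_tr: "bounded_linear (transpose :: real^2^2 \<Rightarrow> real^2^2)"
proof -
  have "linear (transpose :: real^2^2 \<Rightarrow> real^2^2)"
    by (auto intro!: linearI simp: tr_add transpose_scalar)
  then show ?thesis using linear_conv_bounded_linear by blast
qed

lemma mat2_eq: "mat2 a b c d = mat2 a' b' c' d' \<longleftrightarrow> a = a' \<and> b = b' \<and> c = c' \<and> d = d'"
  by (auto simp: mat2_def vec_eq_iff forall_2)

lemma mat2_mult: "mat2 a b c d ** mat2 e f g h = mat2 (a*e+b*g) (a*f+b*h) (c*e+d*g) (c*f+d*h)"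
  by (simp add: mat2_def matrix_matrix_mult_def vec_eq_iff forall_2 sum_2)

lemma mat2_add: "mat2 a b c d + mat2 e f g h = mat2 (a+e) (b+f) (c+g) (d+h)"
  by (simp add: mat2_def vec_eq_iff forall_2)

lemma mat2_scale: "r *\<^sub>R mat2 a b c d = mat2 (r*a) (r*b) (r*c) (r*d)"
  by (simp add: mat2_def vec_eq_iff forall_2)

lemma mat2_tr: "transpose (mat2 a b c d) = mat2 a c b d"
  by (simp add: mat2_def transpose_def vec_eq_iff forall_2)


definition polyd :: "nat \<Rightarrow> (real \<Rightarrow> real^2^2) \<Rightarrow> bool" where
  "polyd d f \<longleftrightarrow> (\<exists>D. \<forall>t. f t = mpoly_eval D d t)"

lemma polyd_add: "polyd d f \<Longrightarrow> polyd d g \<Longrightarrow> polyd d (\<lambda>t. f t + g t)"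
  unfolding polyd_def mpoly_eval_def
  apply (elim exE) subgoal for D E by (rule exI[of _ "\<lambda>i. D i + E i"]) (simp add: scaleR_add_right sum.distrib)
  done

lemma polyd_zero: "polyd d (\<lambda>t. 0)"
  unfolding polyd_def mpoly_eval_def by (rule exI[of _ "\<lambda>i. 0"]) simp

lemma polyd_const: "polyd 0 (\<lambda>t. A)"
  unfolding polyd_def mpoly_eval_def by (rule exI[of _ "\<lambda>i. A"]) simp

lemma polyd_mono: assumes "polyd d f" "d \<le> d'" shows "polyd d' f"
proof -
  obtain D where D: "\<And>t. f t = mpoly_eval D d t" using assms unfolding polyd_def by blast
  define D' where "D' i = (if i \<le> d then D i else 0)" for i
  have "mpoly_eval D' d' t = mpoly_eval D d t" for t
  proof -
    have "mpoly_eval D' d' t = (\<Sum>i\<in>{..d'}. (if i \<le> d then t ^ i *\<^sub>R D i else 0))"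
      unfolding mpoly_eval_def D'_def by (rule sum.cong) auto
    also have "\<dots> = (\<Sum>i\<in>{..d'} \<inter> {i. i \<le> d}. t ^ i *\<^sub>R D i)"
      by (simp add: sum.inter_restrict)
    also have "{..d'} \<inter> {i. i \<le> d} = {..d}" using assms(2) by auto
    finally show ?thesis unfolding mpoly_eval_def .
  qed
  then show ?thesis unfolding polyd_def using D by metis
qed

lemma polyd_rmult: "polyd d f \<Longrightarrow> polyd d (\<lambda>t. f t ** A)"
  unfolding polyd_def mpoly_eval_def
  apply (elim exE) subgoal for D by (rule exI[of _ "\<lambda>i. D i ** A"]) (simp add: mm_sum_r scalar_matrix_assoc)
  done

lemma polyd_scale: "polyd d f \<Longrightarrow> polyd d (\<lambda>t. c *\<^sub>R f t)"
  unfolding polyd_def mpoly_eval_def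
  apply (elim exE) subgoal for D by (rule exI[of _ "\<lambda>i. c *\<^sub>R D i"]) (simp add: scaleR_sum_right mult.commute)
  done

lemma polyd_tmult: assumes "polyd d f" shows "polyd (Suc d) (\<lambda>t. t *\<^sub>R f t)"
proof -
  obtain D where D: "\<And>t. f t = mpoly_eval D d t" using assms unfolding polyd_def by blast
  define D' where "D' i = (if i = 0 then 0 else D (i - 1))" for i
  have "mpoly_eval D' (Suc d) t = t *\<^sub>R mpoly_eval D d t" for t
    unfolding mpoly_eval_def
    by (simp add: sum.atMost_Suc_shift D'_def scaleR_sum_right del: sum.atMost_Suc)
  then show ?thesis unfolding polyd_def using D by metis
qed

lemma polyd_mpoly: "polyd d (mpoly_eval D d)"
  unfolding polyd_def by blast

definition dcoef :: "(nat \<Rightarrow> real^2^2) \<Rightarrow> nat \<Rightarrow> real^2^2" where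
  "dcoef D i = real (Suc i) *\<^sub>R D (Suc i)"

lemma mpoly_deriv_Suc:
  "(mpoly_eval D (Suc e) has_vector_derivative mpoly_eval (dcoef D) e t) (at t)"
proof -
  have "((\<lambda>t. \<Sum>i\<le>Suc e. t ^ i *\<^sub>R D i) has_vector_derivative
          (\<Sum>i\<le>Suc e. (real i * t ^ (i - 1)) *\<^sub>R D i)) (at t)"
    by (rule has_vector_derivative_sum)
       (auto intro!: derivative_eq_intros)
  also have "(\<Sum>i\<le>Suc e. (real i * t ^ (i - 1)) *\<^sub>R D i) = mpoly_eval (dcoef D) e t"
    unfolding mpoly_eval_def dcoef_def
    by (simp add: sum.atMost_Suc_shift mult.commute del: sum.atMost_Suc)
  finally show ?thesis unfolding mpoly_eval_def .
qed

lemma mpoly_deriv_0: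
  "(mpoly_eval D 0 has_vector_derivative 0) (at t)"
  unfolding mpoly_eval_def by simp

lemma polyd_deriv: assumes "polyd d Q"
  shows "\<exists>Q'. (\<forall>t. (Q has_vector_derivative Q' t) (at t)) \<and> polyd (d - 1) Q' \<and> (d = 0 \<longrightarrow> Q' = (\<lambda>t. 0))"
proof -
  obtain D where D: "Q = mpoly_eval D d" using assms unfolding polyd_def by blast
  show ?thesis
  proof (cases d)
    case 0 then show ?thesis using D mpoly_deriv_0 polyd_zero by (intro exI[of _ "\<lambda>t. 0"]) auto
  next
    case (Suc e) then show ?thesis using D mpoly_deriv_Suc polyd_mpoly by fastforce
  qed
qed

lemma mpoly_cont: "continuous_on S (mpoly_eval D d)"
  unfolding mpoly_eval_def by (intro continuous_intros)

lemma vd_mpoly: "vector_derivative (mpoly_eval D (Suc e)) (at t) = mpoly_eval (dcoef D) e t"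
  using mpoly_deriv_Suc vector_derivative_at by blast


lemma decomp:
  assumes mon: "\<And>j. monic_deg (E j) j"
  shows "\<exists>A. \<forall>t. mpoly_eval D d t = (\<Sum>j\<le>d. A j ** mpoly_eval (E j) j t)"
proof (induction d arbitrary: D)
  case 0
  have "E 0 0 = mat 1" using mon[of 0] unfolding monic_deg_def by simp
  then show ?case unfolding mpoly_eval_def by (intro exI[of _ "\<lambda>j. D 0"]) simp
next
  case (Suc e)
  define c where "c = D (Suc e)"
  define D' where "D' i = D i - c ** E (Suc e) i" for i
  have top: "E (Suc e) (Suc e) = mat 1" using mon[of "Suc e"] unfolding monic_deg_def by simp
  have eq: "mpoly_eval D (Suc e) t = mpoly_eval D' e t + c ** mpoly_eval (E (Suc e)) (Suc e) t" for t
  proof -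
    have "c ** mpoly_eval (E (Suc e)) (Suc e) t = (\<Sum>i\<le>Suc e. t ^ i *\<^sub>R (c ** E (Suc e) i))"
      unfolding mpoly_eval_def by (simp add: mm_sum_l matrix_scalar_ac scalar_matrix_assoc[symmetric] del: sum.atMost_Suc)
    then show ?thesis
      unfolding mpoly_eval_def D'_def
      by (simp add: top c_def scaleR_diff_right sum_subtractf)
  qed
  obtain A where A: "\<And>t. mpoly_eval D' e t = (\<Sum>j\<le>e. A j ** mpoly_eval (E j) j t)"
    using Suc.IH by blast
  show ?case
    by (rule exI[of _ "A(Suc e := c)"]) (simp add: eq A)
qed

lemma orth_low:
  assumes mon: "\<And>j. monic_deg (E j) j"
    and orth: "\<And>i j. i \<noteq> j \<Longrightarrow> orth_wrt W (mpoly_eval (E i) i) (mpoly_eval (E j) j)"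
    and R: "polyd d R" and dn: "d < n"
  shows "((\<lambda>t. mpoly_eval (E n) n t ** W t ** transpose (R t)) has_integral 0) {0..1}"
proof -
  obtain D where D: "\<And>t. R t = mpoly_eval D d t" using R unfolding polyd_def by blast
  obtain A where A: "\<And>t. mpoly_eval D d t = (\<Sum>j\<le>d. A j ** mpoly_eval (E j) j t)"
    using decomp[OF mon] by blast
  have eq: "mpoly_eval (E n) n t ** W t ** transpose (R t) =
      (\<Sum>j\<le>d. (mpoly_eval (E n) n t ** W t ** transpose (mpoly_eval (E j) j t)) ** transpose (A j))" for t
    unfolding D A by (simp add: tr_sum mm_sum_l matrix_transpose_mul matrix_mul_assoc)
  have "((\<lambda>t. \<Sum>j\<le>d. (mpoly_eval (E n) n t ** W t ** transpose (mpoly_eval (E j) j t)) ** transpose (A j))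
      has_integral (\<Sum>j\<le>d. 0)) {0..1}"
  proof (rule has_integral_sum)
    fix j assume "j \<in> {..d}"
    then have "j \<noteq> n" using dn by auto
    then have h: "((\<lambda>t. mpoly_eval (E n) n t ** W t ** transpose (mpoly_eval (E j) j t)) has_integral 0) {0..1}"
      using orth[of n j] unfolding orth_wrt_def by blast
    have "(((\<lambda>X. X ** transpose (A j)) \<circ> (\<lambda>t. mpoly_eval (E n) n t ** W t ** transpose (mpoly_eval (E j) j t)))
        has_integral (0 ** transpose (A j))) {0..1}"
      by (rule has_integral_linear[OF h bounded_bilinear.bounded_linear_left[OF bilin_mm]])
    then show "((\<lambda>t. (mpoly_eval (E n) n t ** W t ** transpose (mpoly_eval (E j) j t)) ** transpose (A j))
        has_integral 0) {0..1}" by (simp add: o_def)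
  qed simp
  then show ?thesis unfolding eq by simp
qed

lemma orth_sym:
  assumes sym: "\<And>t. transpose (W t) = W t" and o: "orth_wrt W P Q"
  shows "orth_wrt W Q P"
proof -
  have "((transpose \<circ> (\<lambda>t. P t ** W t ** transpose (Q t))) has_integral transpose 0) {0..1}"
    using has_integral_linear[OF o[unfolded orth_wrt_def] bl_tr] .
  moreover have "(transpose \<circ> (\<lambda>t. P t ** W t ** transpose (Q t))) = (\<lambda>t. Q t ** W t ** transpose (P t))"
    by (auto simp: matrix_transpose_mul sym matrix_mul_assoc)
  ultimately show ?thesis unfolding orth_wrt_def by (simp add: tr_zero)
qed


definition Mm :: "real \<Rightarrow> real \<Rightarrow> real \<Rightarrow> real \<Rightarrow> real^2^2" where
  "Mm a b v t = mat2 (v * (a + v + b + 2) / (a + v - b) * t^2 - (a + v + b + 2) * t + (a + 1))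
          ((a + b + 2) * t - (a + 1))
          ((a + b + 2) * t - (a + 1))
          (- v * (a - v + b + 2) / (a - v - b) * t^2 - (a - v + b + 2) * t + (a + 1))"

lemma Wmat_Mm: "Wmat a b v t = (t powr a * (1 - t) powr b) *\<^sub>R Mm a b v t"
  unfolding Wmat_def Mm_def ..

definition "MA0 a b v = mat2 (a + 1) (- (a + 1)) (- (a + 1)) (a + 1)"
definition "MA1 a b v = mat2 (- (a + v + b + 2)) (a + b + 2) (a + b + 2) (- (a - v + b + 2))"
definition "MA2 a b v = mat2 (v * (a + v + b + 2) / (a + v - b)) 0 0 (- v * (a - v + b + 2) / (a - v - b))"

lemma Mm_coef: "Mm a b v t = MA0 a b v + t *\<^sub>R MA1 a b v + t^2 *\<^sub>R MA2 a b v"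
  unfolding Mm_def MA0_def MA1_def MA2_def mat2_add mat2_scale mat2_eq by (simp add: algebra_simps)

definition "dMm a b v t = MA1 a b v + (2 * t) *\<^sub>R MA2 a b v"

lemma Mm_deriv: "(Mm a b v has_vector_derivative dMm a b v t) (at t)"
proof -
  have "((\<lambda>t. MA0 a b v + t *\<^sub>R MA1 a b v + t^2 *\<^sub>R MA2 a b v) has_vector_derivative dMm a b v t) (at t)"
    unfolding dMm_def by (auto intro!: derivative_eq_intros)
  then show ?thesis unfolding Mm_coef[abs_def] .
qed

lemma Mm_cont: "continuous_on S (Mm a b v)"
  unfolding Mm_coef[abs_def] by (intro continuous_intros)

lemma Mm_sym: "transpose (Mm a b v t) = Mm a b v t"
  unfolding Mm_def mat2_tr ..

definition "D0 a b v t = mat2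
   ((a - v - b) * (v * (a + v + b + 2) * t^2 - (a + v - b) * (a + v + b + 2) * t + (a + v - b) * (a + 1)))
   ((a + v - b) * (a - v - b) * ((a + b + 2) * t - (a + 1)))
   ((a + v - b) * (a - v - b) * ((a + b + 2) * t - (a + 1)))
   ((a + v - b) * (- v * (a - v + b + 2) * t^2 - (a - v - b) * (a - v + b + 2) * t + (a - v - b) * (a + 1)))"

definition "dD0 a b v t = mat2
   ((a - v - b) * (2 * v * (a + v + b + 2) * t - (a + v - b) * (a + v + b + 2)))
   ((a + v - b) * (a - v - b) * (a + b + 2))
   ((a + v - b) * (a - v - b) * (a + b + 2))
   ((a + v - b) * (- 2 * v * (a - v + b + 2) * t - (a - v - b) * (a - v + b + 2)))"

lemma D0_eq:
  fixes a b v t :: real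
  assumes "a + v - b \<noteq> 0" "a - v - b \<noteq> 0"
  shows "D0 a b v t = ((a + v - b) * (a - v - b)) *\<^sub>R Mm a b v t"
  unfolding D0_def Mm_def mat2_scale mat2_eq using assms
  by (simp add: field_simps)

lemma dD0_eq:
  fixes a b v t :: real
  assumes "a + v - b \<noteq> 0" "a - v - b \<noteq> 0"
  shows "dD0 a b v t = ((a + v - b) * (a - v - b)) *\<^sub>R dMm a b v t"
  unfolding dD0_def dMm_def MA1_def MA2_def mat2_add mat2_scale mat2_eq using assms
  by (simp add: field_simps)

definition "PN0 a b v = mat2 (- ((a+v-b) * (a-v-b))) ((a+v-b) * (a-v-b)) (- ((a+v-b) * (a-v-b))) ((a+v-b) * (a-v-b))"
definition "PN1 a b v = mat2 (v * (a+b+2-v) * (a+b+2+v+2)) (2 * v * (a+v-b)) (2 * v * (a-v-b)) (v * (a+b+2+v) * (a+b+2-v+2))"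
definition "PN2 a b v = mat2 (- (v * (a+b+2-v) * (a+b+2+v+2))) 0 0 (- (v * (a+b+2+v) * (a+b+2-v+2)))"
definition "PhiN a b v t = PN0 a b v + t *\<^sub>R PN1 a b v + t^2 *\<^sub>R PN2 a b v"

definition "SN0 a b v = mat2 ((a+b+2-v) * (a+b+2+v+2) * (2 * v+b-a+a * v)) ((a+v-b) * (a+b+4) * (a+b+2+v))
   (- ((a-v-b) * (a+b+4) * (a+b+2-v))) ((a+b+2+v) * (a+b+2-v+2) * (2 * v-b+a+a * v))"
definition "SN1 a b v = mat2 (- ((a+b+2-v) * (a+b+2+v+2) * v * (a+b+4))) 0 0 (- ((a+b+2+v) * (a+b+2-v+2) * v * (a+b+4)))"
definition "PsiN a b v t = SN0 a b v + t *\<^sub>R SN1 a b v"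

lemma PhiN_id:
  fixes a b v t :: real
  shows "(v * (a+b+2+v) * (a+b+2-v) * (t * (1 - t))) *\<^sub>R D0 (a+1) (b+1) v t = D0 a b v t ** PhiN a b v t"
  unfolding D0_def PhiN_def PN0_def PN1_def PN2_def mat2_add mat2_scale mat2_mult mat2_eq
  by (intro conjI; algebra)

lemma PsiN_id:
  fixes a b v t :: real
  shows "(v * (a+b+2+v) * (a+b+2-v)) *\<^sub>R (((a+1) * (1-t) - (b+1) * t) *\<^sub>R D0 (a+1) (b+1) v t
     + (t * (1 - t)) *\<^sub>R dD0 (a+1) (b+1) v t) = D0 a b v t ** PsiN a b v t"
  unfolding D0_def dD0_def PsiN_def SN0_def SN1_def mat2_add mat2_scale mat2_mult mat2_eq
  by (intro conjI; algebra)


definition "PhiT a b v t = (1 / (v * (a+b+2+v) * (a+b+2-v))) *\<^sub>R PhiN a b v t"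
definition "PsiT a b v t = (1 / (v * (a+b+2+v) * (a+b+2-v))) *\<^sub>R PsiN a b v t"

lemma mm_scale_r: "(A::real^2^2) ** (c *\<^sub>R B) = c *\<^sub>R (A ** B)"
  by (simp add: matrix_scalar_ac scalar_matrix_assoc)
lemma mm_scale_l: "(c *\<^sub>R (A::real^2^2)) ** B = c *\<^sub>R (A ** B)"
  by (simp add: scalar_matrix_assoc)

lemma Phi_id:
  fixes a b v t :: real
  assumes nz: "v \<noteq> 0" "a+v-b \<noteq> 0" "a-v-b \<noteq> 0" "a+b+2+v \<noteq> 0" "a+b+2-v \<noteq> 0"
  shows "(t * (1 - t)) *\<^sub>R Mm (a+1) (b+1) v t = Mm a b v t ** PhiT a b v t"
proof -
  define K where "K = (a + v - b) * (a - v - b)"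
  define c where "c = v * (a+b+2+v) * (a+b+2-v)"
  have K: "K \<noteq> 0" "c \<noteq> 0" using nz unfolding K_def c_def by auto
  have e1: "D0 (a+1) (b+1) v t = K *\<^sub>R Mm (a+1) (b+1) v t"
    using D0_eq[of "a+1" v "b+1" t] nz unfolding K_def by (simp add: algebra_simps)
  have e0: "D0 a b v t = K *\<^sub>R Mm a b v t" using D0_eq nz unfolding K_def by simp
  have "K *\<^sub>R ((c * (t * (1 - t))) *\<^sub>R Mm (a+1) (b+1) v t) = K *\<^sub>R (Mm a b v t ** PhiN a b v t)"
    using PhiN_id[of v a b t] unfolding e1 e0 c_def[symmetric] by (simp add: mm_scale_l mult_ac)
  then have h: "(c * (t * (1 - t))) *\<^sub>R Mm (a+1) (b+1) v t = Mm a b v t ** PhiN a b v t"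
    using K(1) scaleR_cancel_left by blast
  show ?thesis unfolding PhiT_def c_def[symmetric] mm_scale_r h[symmetric] using K by simp
qed

lemma Psi_id:
  fixes a b v t :: real
  assumes nz: "v \<noteq> 0" "a+v-b \<noteq> 0" "a-v-b \<noteq> 0" "a+b+2+v \<noteq> 0" "a+b+2-v \<noteq> 0"
  shows "((a+1) * (1-t) - (b+1) * t) *\<^sub>R Mm (a+1) (b+1) v t + (t * (1 - t)) *\<^sub>R dMm (a+1) (b+1) v t
     = Mm a b v t ** PsiT a b v t"
proof -
  define K where "K = (a + v - b) * (a - v - b)"
  define c where "c = v * (a+b+2+v) * (a+b+2-v)"
  have K: "K \<noteq> 0" "c \<noteq> 0" using nz unfolding K_def c_def by auto
  have e1: "D0 (a+1) (b+1) v t = K *\<^sub>R Mm (a+1) (b+1) v t"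
    using D0_eq[of "a+1" v "b+1" t] nz unfolding K_def by (simp add: algebra_simps)
  have e2: "dD0 (a+1) (b+1) v t = K *\<^sub>R dMm (a+1) (b+1) v t"
    using dD0_eq[of "a+1" v "b+1" t] nz unfolding K_def by (simp add: algebra_simps)
  have e0: "D0 a b v t = K *\<^sub>R Mm a b v t" using D0_eq nz unfolding K_def by simp
  define N where "N = ((a+1) * (1-t) - (b+1) * t) *\<^sub>R Mm (a+1) (b+1) v t + (t * (1 - t)) *\<^sub>R dMm (a+1) (b+1) v t"
  have "K *\<^sub>R (c *\<^sub>R N) = K *\<^sub>R (Mm a b v t ** PsiN a b v t)"
    using PsiN_id[of v a b t] unfolding e1 e2 e0 c_def[symmetric] N_def
    by (simp add: mm_scale_l scaleR_add_right mult_ac)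
  then have h: "c *\<^sub>R N = Mm a b v t ** PsiN a b v t"
    using K(1) scaleR_cancel_left by blast
  show ?thesis unfolding PsiT_def c_def[symmetric] mm_scale_r h[symmetric] N_def[symmetric] using K by simp
qed


lemma polyd_lin: assumes "polyd d Q"
  shows "polyd (Suc d) (\<lambda>t. Q t ** transpose (c *\<^sub>R (X + t *\<^sub>R Y)))"
proof -
  have eq: "Q t ** transpose (c *\<^sub>R (X + t *\<^sub>R Y)) = c *\<^sub>R (Q t ** transpose X + t *\<^sub>R (Q t ** transpose Y))" for t
    by (simp add: transpose_scalar tr_add matrix_add_ldistrib mm_scale_r scaleR_add_right)
  show ?thesis unfolding eq
    by (intro polyd_scale polyd_add polyd_tmult polyd_rmult polyd_mono[OF assms]) simp_all
qed

lemma polyd_quad: assumes "polyd d Q"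
  shows "polyd (Suc (Suc d)) (\<lambda>t. Q t ** transpose (c *\<^sub>R (X + t *\<^sub>R Y + t^2 *\<^sub>R Z)))"
proof -
  have eq: "Q t ** transpose (c *\<^sub>R (X + t *\<^sub>R Y + t^2 *\<^sub>R Z)) = c *\<^sub>R (Q t ** transpose X + t *\<^sub>R (Q t ** transpose Y)
     + t *\<^sub>R (t *\<^sub>R (Q t ** transpose Z)))" for t
    by (simp add: transpose_scalar tr_add matrix_add_ldistrib mm_scale_r scaleR_add_right power2_eq_square)
  show ?thesis unfolding eq
    by (intro polyd_scale polyd_add polyd_tmult polyd_rmult polyd_mono[OF assms]) simp_all
qed

lemma u_deriv:
  fixes a b x :: real
  assumes "0 < x" "x < 1"
  shows "((\<lambda>t. t powr (a+1) * (1 - t) powr (b+1)) has_real_derivative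
     (x powr a * (1 - x) powr b) * ((a+1) * (1-x) - (b+1) * x)) (at x)"
proof -
  have h1: "((\<lambda>t. t powr (a+1)) has_real_derivative (a+1) * x powr a) (at x)"
    using has_real_derivative_powr[OF assms(1), of "a+1"] by simp
  have h2: "((\<lambda>t. (1 - t) powr (b+1)) has_real_derivative (b+1) * (1 - x) powr b * (-1)) (at x)"
  proof -
    have hp: "((\<lambda>z. z powr (b+1)) has_real_derivative (b+1) * (1-x) powr b) (at (1-x))"
      using has_real_derivative_powr[of "1-x" "b+1"] assms by simp
    have hl: "((\<lambda>t. 1 - t) has_real_derivative -1) (at x)" by (auto intro!: derivative_eq_intros)
    show ?thesis using DERIV_chain2[OF hp hl] by simp
  qed
  have "((\<lambda>t. t powr (a+1) * (1 - t) powr (b+1)) has_real_derivative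
     x powr (a+1) * ((b+1) * (1 - x) powr b * (-1)) + (a+1) * x powr a * (1 - x) powr (b+1)) (at x)"
    using DERIV_mult[OF h1 h2] by (simp add: algebra_simps)
  moreover have "x powr (a+1) = x powr a * x" using assms by (simp add: powr_add)
  moreover have "(1 - x) powr (b+1) = (1 - x) powr b * (1 - x)" using assms by (simp add: powr_add)
  ultimately have "((\<lambda>t. t powr (a+1) * (1 - t) powr (b+1)) has_real_derivative
     x powr a * x * ((b+1) * (1 - x) powr b * (-1)) + (a+1) * x powr a * ((1 - x) powr b * (1 - x))) (at x)"
    by simp
  moreover have "x powr a * x * ((b+1) * (1 - x) powr b * (-1)) + (a+1) * x powr a * ((1 - x) powr b * (1 - x))
     = (x powr a * (1 - x) powr b) * ((a+1) * (1-x) - (b+1) * x)" by (simp add: algebra_simps)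
  ultimately show ?thesis by simp
qed


lemma nz_conds:
  fixes a b v :: real
  assumes "\<bar>a - b\<bar> < \<bar>v\<bar>" "\<bar>v\<bar> < a + b + 2"
  shows "v \<noteq> 0" "a+v-b \<noteq> 0" "a-v-b \<noteq> 0" "a+b+2+v \<noteq> 0" "a+b+2-v \<noteq> 0"
  using assms by auto

lemma assoc_aux: "(A::real^2^2) ** (s *\<^sub>R ((M::real^2^2) ** (X::real^2^2))) ** (Y::real^2^2) = A ** (s *\<^sub>R M) ** (X ** Y)"
  by (simp add: mm_scale_l mm_scale_r matrix_mul_assoc)

lemma step_int:
  fixes a b v :: real and E :: "nat \<Rightarrow> nat \<Rightarrow> real^2^2" and n m :: nat
  assumes ab: "a > -1" "b > -1" "\<bar>a - b\<bar> < \<bar>v\<bar>" "\<bar>v\<bar> < a + b + 2"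
    and mon: "\<And>j. monic_deg (E j) j"
    and orth: "\<And>i j. i \<noteq> j \<Longrightarrow> orth_wrt (Wmat a b v) (mpoly_eval (E i) i) (mpoly_eval (E j) j)"
    and mn: "m < n" "1 \<le> m"
  shows "((\<lambda>t. mpoly_eval (dcoef (E n)) (n-1) t ** Wmat (a+1) (b+1) v t
            ** transpose (mpoly_eval (dcoef (E m)) (m-1) t)) has_integral 0) {0..1}"
proof -
  note nz = nz_conds[OF ab(3,4)]
  define P where "P = mpoly_eval (E n) n"
  define P' where "P' = mpoly_eval (dcoef (E n)) (n-1)"
  define Q where "Q = mpoly_eval (dcoef (E m)) (m-1)"
  have hP: "(P has_vector_derivative P' t) (at t)" for t
    using mpoly_deriv_Suc[of "E n" "n-1" t] mn unfolding P_def P'_def by (simp add: Suc_diff_1)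
  have pQ: "polyd (m-1) Q" by (simp add: Q_def polyd_mpoly)
  obtain Q' where Q'all: "(\<forall>t. (Q has_vector_derivative Q' t) (at t)) \<and> polyd (m-1-1) Q'
    \<and> (m-1 = 0 \<longrightarrow> Q' = (\<lambda>t. 0))"
    using polyd_deriv[OF pQ] by (erule exE)
  note hQ = conjunct1[OF Q'all]
  note pQ' = conjunct1[OF conjunct2[OF Q'all]]
  note Q0 = conjunct2[OF conjunct2[OF Q'all]]
  define w where "w t = t powr a * (1-t) powr b" for t
  define W1 where "W1 = Wmat (a+1) (b+1) v"
  define W0 where "W0 = Wmat a b v"
  define R where "R t = Q t ** transpose (PsiT a b v t) + Q' t ** transpose (PhiT a b v t)" for t
  have pR: "polyd m R"
  proof -
    have p1: "polyd m (\<lambda>t. Q t ** transpose (PsiT a b v t))"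
      using polyd_lin[OF pQ, of "1 / (v * (a+b+2+v) * (a+b+2-v))" "SN0 a b v" "SN1 a b v"] mn
      unfolding PsiT_def PsiN_def by simp
    have p2: "polyd m (\<lambda>t. Q' t ** transpose (PhiT a b v t))"
    proof (cases "m - 1 = 0")
      case True then show ?thesis using Q0 polyd_zero by simp
    next
      case False
      then show ?thesis
        using polyd_quad[OF pQ', of "1 / (v * (a+b+2+v) * (a+b+2-v))" "PN0 a b v" "PN1 a b v" "PN2 a b v"] mn
        unfolding PhiT_def PhiN_def by (simp add: Suc_diff_Suc numeral_2_eq_2)
    qed
    show ?thesis unfolding R_def by (rule polyd_add[OF p1 p2])
  qed
  have int0: "((\<lambda>t. P t ** W0 t ** transpose (R t)) has_integral 0) {0..1}"
    unfolding P_def W0_def by (rule orth_low[OF mon orth pR mn(1)])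
  define f where "f t = P t ** W1 t ** transpose (Q t)" for t
  have W1eq: "W1 = (\<lambda>t. (t powr (a+1) * (1 - t) powr (b+1)) *\<^sub>R Mm (a+1) (b+1) v t)"
    unfolding W1_def by (rule ext) (rule Wmat_Mm)
  have deriv: "(f has_vector_derivative (P' x ** W1 x ** transpose (Q x) + P x ** W0 x ** transpose (R x))) (at x)"
    if x: "x \<in> {0<..<1}" for x
  proof -
    have x0: "0 < x" "x < 1" using x by auto
    have ux: "x powr (a+1) * (1 - x) powr (b+1) = w x * (x * (1 - x))"
      using x0 unfolding w_def by (simp add: powr_add)
    have W1x: "W1 x = w x *\<^sub>R (Mm a b v x ** PhiT a b v x)"
    proof -
      have "W1 x = (w x * (x * (1 - x))) *\<^sub>R Mm (a+1) (b+1) v x" unfolding W1eq ux ..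
      also have "\<dots> = w x *\<^sub>R ((x * (1 - x)) *\<^sub>R Mm (a+1) (b+1) v x)" by simp
      also have "\<dots> = w x *\<^sub>R (Mm a b v x ** PhiT a b v x)" unfolding Phi_id[OF nz, of x] ..
      finally show ?thesis .
    qed
    have W0x: "W0 x = w x *\<^sub>R Mm a b v x" unfolding W0_def w_def by (simp add: Wmat_Mm)
    have hW1': "(W1 has_vector_derivative
       ((x powr (a+1) * (1 - x) powr (b+1)) *\<^sub>R dMm (a+1) (b+1) v x
        + (w x * ((a+1) * (1-x) - (b+1) * x)) *\<^sub>R Mm (a+1) (b+1) v x)) (at x)"
      unfolding W1eq w_def
      by (rule has_vector_derivative_scaleR[OF u_deriv[OF x0] Mm_deriv])
    have "(x powr (a+1) * (1 - x) powr (b+1)) *\<^sub>R dMm (a+1) (b+1) v x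
        + (w x * ((a+1) * (1-x) - (b+1) * x)) *\<^sub>R Mm (a+1) (b+1) v x
        = w x *\<^sub>R (((a+1) * (1-x) - (b+1) * x) *\<^sub>R Mm (a+1) (b+1) v x + (x * (1 - x)) *\<^sub>R dMm (a+1) (b+1) v x)"
      unfolding ux by (simp add: scaleR_add_right)
    also have "\<dots> = w x *\<^sub>R (Mm a b v x ** PsiT a b v x)" using Psi_id[OF nz, of x] by simp
    finally have hW1: "(W1 has_vector_derivative w x *\<^sub>R (Mm a b v x ** PsiT a b v x)) (at x)"
      using hW1' by simp
    have hQT: "((\<lambda>t. transpose (Q t)) has_vector_derivative transpose (Q' x)) (at x)"
      using bounded_linear.has_vector_derivative[OF bl_tr hQ[rule_format, of x]] .
    have hPW: "((\<lambda>t. P t ** W1 t) has_vector_derivative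
        (P x ** (w x *\<^sub>R (Mm a b v x ** PsiT a b v x)) + P' x ** W1 x)) (at x)"
      using bounded_bilinear.has_vector_derivative[OF bilin_mm hP hW1] .
    have hf: "(f has_vector_derivative (P x ** W1 x ** transpose (Q' x)
        + (P x ** (w x *\<^sub>R (Mm a b v x ** PsiT a b v x)) + P' x ** W1 x) ** transpose (Q x))) (at x)"
      unfolding f_def[abs_def]
      using bounded_bilinear.has_vector_derivative[OF bilin_mm hPW hQT] .
    have eq: "P x ** W1 x ** transpose (Q' x)
        + (P x ** (w x *\<^sub>R (Mm a b v x ** PsiT a b v x)) + P' x ** W1 x) ** transpose (Q x)
        = P' x ** W1 x ** transpose (Q x) + P x ** W0 x ** transpose (R x)"
    proof -
      have k: "P x ** (w x *\<^sub>R (Mm a b v x ** X)) ** Y = P x ** (w x *\<^sub>R Mm a b v x) ** (X ** Y)" for X Y :: "real^2^2"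
        by (rule assoc_aux)
      have tR: "transpose (R x) = PsiT a b v x ** transpose (Q x) + PhiT a b v x ** transpose (Q' x)"
        unfolding R_def by (simp add: tr_add matrix_transpose_mul)
      show ?thesis
        unfolding tR W0x
        apply (subst (1) W1x)
        by (simp only: matrix_add_ldistrib mm_add_r k add_ac)
    qed
    show ?thesis using hf unfolding eq .
  qed
  have cont: "continuous_on {0..1} f"
  proof -
    have c1: "continuous_on {0..1} (\<lambda>t::real. t powr (a+1))"
      by (rule continuous_on_powr') (use ab in \<open>auto intro: continuous_intros\<close>)
    have c2: "continuous_on {0..1} (\<lambda>t::real. (1 - t) powr (b+1))"
      by (rule continuous_on_powr') (use ab in \<open>auto intro: continuous_intros\<close>)
    have cW: "continuous_on {0..1} W1"
      unfolding W1eq by (intro continuous_on_scaleR continuous_on_mult c1 c2 Mm_cont)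
    have cP: "continuous_on {0..1} P" unfolding P_def by (rule mpoly_cont)
    have cQ: "continuous_on {0..1} (\<lambda>t. transpose (Q t))"
      unfolding Q_def by (rule bounded_linear.continuous_on[OF bl_tr mpoly_cont])
    show ?thesis unfolding f_def[abs_def]
      by (intro bounded_bilinear.continuous_on[OF bilin_mm] cP cW cQ)
  qed
  have f01: "f 1 = 0" "f 0 = 0" unfolding f_def W1eq using ab by simp_all
  have "((\<lambda>x. P' x ** W1 x ** transpose (Q x) + P x ** W0 x ** transpose (R x)) has_integral f 1 - f 0) {0..1}"
    by (rule fundamental_theorem_of_calculus_interior[OF _ cont deriv]) simp_all
  from has_integral_diff[OF this int0]
  have "((\<lambda>x. P' x ** W1 x ** transpose (Q x)) has_integral 0) {0..1}" unfolding f01 by simp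
  then show ?thesis unfolding P'_def Q_def W1_def .
qed


lemma Wmat_sym: "transpose (Wmat a b v t) = Wmat a b v t"
  by (simp add: Wmat_Mm transpose_scalar Mm_sym)

lemma mpoly_scale: "mpoly_eval (\<lambda>i. c *\<^sub>R D i) d t = c *\<^sub>R mpoly_eval D d t"
  unfolding mpoly_eval_def by (simp add: scaleR_sum_right mult.commute)

lemma dcoef_scale: "dcoef (\<lambda>i. c *\<^sub>R D i) = (\<lambda>i. c *\<^sub>R dcoef D i)"
  unfolding dcoef_def by (simp add: fun_eq_iff mult.commute)

lemma step_family:
  fixes a b v :: real and E :: "nat \<Rightarrow> nat \<Rightarrow> real^2^2"
  assumes ab: "a > -1" "b > -1" "\<bar>a - b\<bar> < \<bar>v\<bar>" "\<bar>v\<bar> < a + b + 2"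
    and mon: "\<And>j. monic_deg (E j) j"
    and orth: "\<And>i j. i \<noteq> j \<Longrightarrow> orth_wrt (Wmat a b v) (mpoly_eval (E i) i) (mpoly_eval (E j) j)"
  shows "\<And>j. monic_deg (\<lambda>i. (1 / real (Suc j)) *\<^sub>R dcoef (E (Suc j)) i) j"
    and "\<And>i j. i \<noteq> j \<Longrightarrow> orth_wrt (Wmat (a+1) (b+1) v)
           (mpoly_eval (\<lambda>l. (1 / real (Suc i)) *\<^sub>R dcoef (E (Suc i)) l) i)
           (mpoly_eval (\<lambda>l. (1 / real (Suc j)) *\<^sub>R dcoef (E (Suc j)) l) j)"
proof -
  fix j
  have "E (Suc j) (Suc j) = mat 1" using mon[of "Suc j"] unfolding monic_deg_def .
  then show "monic_deg (\<lambda>i. (1 / real (Suc j)) *\<^sub>R dcoef (E (Suc j)) i) j"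
    unfolding monic_deg_def dcoef_def by simp
next
  have gt: "orth_wrt (Wmat (a+1) (b+1) v)
           (mpoly_eval (\<lambda>l. (1 / real (Suc i)) *\<^sub>R dcoef (E (Suc i)) l) i)
           (mpoly_eval (\<lambda>l. (1 / real (Suc j)) *\<^sub>R dcoef (E (Suc j)) l) j)" if ij: "j < i" for i j
  proof -
    have h: "((\<lambda>t. mpoly_eval (dcoef (E (Suc i))) i t ** Wmat (a+1) (b+1) v t
            ** transpose (mpoly_eval (dcoef (E (Suc j))) j t)) has_integral 0) {0..1}"
      using step_int[OF ab mon orth, of "Suc j" "Suc i"] ij by simp
    have "((\<lambda>t. ((1 / real (Suc i)) * (1 / real (Suc j))) *\<^sub>R (mpoly_eval (dcoef (E (Suc i))) i t ** Wmat (a+1) (b+1) v t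
            ** transpose (mpoly_eval (dcoef (E (Suc j))) j t))) has_integral 0) {0..1}"
      using has_integral_cmul[OF h] by simp
    then show ?thesis unfolding orth_wrt_def mpoly_scale
      by (simp add: transpose_scalar mm_scale_l mm_scale_r mult_ac)
  qed
  fix i j :: nat assume "i \<noteq> j"
  then consider "j < i" | "i < j" by linarith
  then show "orth_wrt (Wmat (a+1) (b+1) v)
           (mpoly_eval (\<lambda>l. (1 / real (Suc i)) *\<^sub>R dcoef (E (Suc i)) l) i)
           (mpoly_eval (\<lambda>l. (1 / real (Suc j)) *\<^sub>R dcoef (E (Suc j)) l) j)"
  proof cases
    case 1 then show ?thesis by (rule gt)
  next
    case 2 then show ?thesis using orth_sym[OF Wmat_sym gt[OF 2]] by simp
  qed
qed

lemma levels:
  fixes \<alpha> \<beta> v :: real and C :: "nat \<Rightarrow> nat \<Rightarrow> real^2^2"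
  assumes ab: "\<alpha> > -1" "\<beta> > -1" "\<bar>\<alpha> - \<beta>\<bar> < \<bar>v\<bar>" "\<bar>v\<bar> < \<alpha> + \<beta> + 2"
    and mon: "\<And>j. monic_deg (C j) j"
    and orth: "\<And>i j. i \<noteq> j \<Longrightarrow> orth_wrt (Wmat \<alpha> \<beta> v) (mpoly_eval (C i) i) (mpoly_eval (C j) j)"
  shows "(\<forall>j. monic_deg (\<lambda>l. (fact j / fact (j + k)) *\<^sub>R (dcoef ^^ k) (C (j + k)) l) j) \<and>
    (\<forall>i j. i \<noteq> j \<longrightarrow> orth_wrt (Wmat (\<alpha> + real k) (\<beta> + real k) v)
        (mpoly_eval (\<lambda>l. (fact i / fact (i + k)) *\<^sub>R (dcoef ^^ k) (C (i + k)) l) i)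
        (mpoly_eval (\<lambda>l. (fact j / fact (j + k)) *\<^sub>R (dcoef ^^ k) (C (j + k)) l) j))"
proof (induction k)
  case 0
  then show ?case using mon orth by simp
next
  case (Suc k)
  define E where "E j = (\<lambda>l. (fact j / fact (j + k)) *\<^sub>R (dcoef ^^ k) (C (j + k)) l)" for j
  have monE: "\<And>j. monic_deg (E j) j" and orthE: "\<And>i j. i \<noteq> j \<Longrightarrow>
     orth_wrt (Wmat (\<alpha> + real k) (\<beta> + real k) v) (mpoly_eval (E i) i) (mpoly_eval (E j) j)"
    using Suc.IH unfolding E_def by blast+
  have ab': "\<alpha> + real k > -1" "\<beta> + real k > -1" "\<bar>(\<alpha> + real k) - (\<beta> + real k)\<bar> < \<bar>v\<bar>"
    "\<bar>v\<bar> < (\<alpha> + real k) + (\<beta> + real k) + 2" using ab by auto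
  have eqE: "(\<lambda>l. (1 / real (Suc j)) *\<^sub>R dcoef (E (Suc j)) l) =
      (\<lambda>l. (fact j / fact (j + Suc k)) *\<^sub>R (dcoef ^^ Suc k) (C (j + Suc k)) l)" for j
  proof -
    have c: "1 / real (Suc j) * (fact (Suc j) / fact (Suc j + k)) = (fact j / fact (j + Suc k) :: real)"
    proof -
      have "1 / real (Suc j) * (fact (Suc j) / fact (Suc j + k)) = (fact (Suc j) / real (Suc j)) / (fact (Suc j + k) :: real)"
        by simp
      also have "fact (Suc j) / real (Suc j) = (fact j :: real)"
        by (simp only: fact_Suc) (simp del: of_nat_Suc)
      finally show ?thesis by simp
    qed
    show ?thesis unfolding E_def dcoef_scale
      by (simp add: c[symmetric])
  qed
  have r: "\<alpha> + real (Suc k) = \<alpha> + real k + 1" "\<beta> + real (Suc k) = \<beta> + real k + 1" by simp_all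
  show ?case
    using step_family[OF ab' monE orthE] unfolding eqE r by blast
qed

lemma kth_mpoly: "kth_deriv k (mpoly_eval D (e + k)) = mpoly_eval ((dcoef ^^ k) D) e"
proof (induction k arbitrary: D)
  case 0
  then show ?case unfolding kth_deriv_def by simp
next
  case (Suc k)
  have vd: "(\<lambda>t. vector_derivative (mpoly_eval D (e + Suc k)) (at t)) = mpoly_eval (dcoef D) (e + k)"
    using vd_mpoly[of D "e + k"] by (simp add: fun_eq_iff)
  have "kth_deriv (Suc k) (mpoly_eval D (e + Suc k)) = kth_deriv k (\<lambda>t. vector_derivative (mpoly_eval D (e + Suc k)) (at t))"
    unfolding kth_deriv_def funpow_Suc_right by simp
  also have "\<dots> = mpoly_eval ((dcoef ^^ k) (dcoef D)) e" unfolding vd Suc.IH ..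
  also have "(dcoef ^^ k) (dcoef D) = (dcoef ^^ Suc k) D" unfolding funpow_Suc_right by simp
  finally show ?case .
qed


lemma final_eq:
  assumes "k \<le> n"
  shows "(\<lambda>t. (fact (n - k) / fact n) *\<^sub>R kth_deriv k (mpoly_eval (C n) n) t)
       = mpoly_eval (\<lambda>l. (fact (n - k) / fact (n - k + k)) *\<^sub>R (dcoef ^^ k) (C (n - k + k)) l) (n - k)"
proof -
  have nn: "n - k + k = n" using assms by simp
  have "kth_deriv k (mpoly_eval (C n) n) = mpoly_eval ((dcoef ^^ k) (C n)) (n - k)"
    using kth_mpoly[of k "C n" "n - k"] unfolding nn .
  then show ?thesis unfolding nn by (simp add: fun_eq_iff mpoly_scale)
qed

theorem corollary5p4:
  fixes \<alpha> \<beta> v :: real and C :: "nat \<Rightarrow> nat \<Rightarrow> real^2^2" and k n m :: nat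
  assumes "\<alpha> > -1" and "\<beta> > -1" and "\<bar>\<alpha> - \<beta>\<bar> < \<bar>v\<bar>" and "\<bar>v\<bar> < \<alpha> + \<beta> + 2"
    and monic: "\<And>j. monic_deg (C j) j"
    and orth: "\<And>i j. i \<noteq> j \<Longrightarrow>
        orth_wrt (Wmat \<alpha> \<beta> v) (mpoly_eval (C i) i) (mpoly_eval (C j) j)"
    and "k \<ge> 1" and "n \<ge> k" and "m \<ge> k" and "n \<noteq> m"
  shows "orth_wrt (Wmat (\<alpha> + real k) (\<beta> + real k) v)
           (\<lambda>t. (fact (n - k) / fact n) *\<^sub>R kth_deriv k (mpoly_eval (C n) n) t)
           (\<lambda>t. (fact (m - k) / fact m) *\<^sub>R kth_deriv k (mpoly_eval (C m) m) t)"
proof -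
  have L: "\<forall>i j. i \<noteq> j \<longrightarrow> orth_wrt (Wmat (\<alpha> + real k) (\<beta> + real k) v)
        (mpoly_eval (\<lambda>l. (fact i / fact (i + k)) *\<^sub>R (dcoef ^^ k) (C (i + k)) l) i)
        (mpoly_eval (\<lambda>l. (fact j / fact (j + k)) *\<^sub>R (dcoef ^^ k) (C (j + k)) l) j)"
    using levels[OF assms(1-4) monic orth, of k] by blast
  have "n - k \<noteq> m - k" using assms by linarith
  then show ?thesis
    unfolding final_eq[OF \<open>n \<ge> k\<close>] final_eq[OF \<open>m \<ge> k\<close>] using L by blast
qed

end
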